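(* Let $B$ be a nonempty finite set and $M\subseteq\omega^B$ an upper set. Then the function $x\mapsto\nu_x(M)$ on $\mathbb{R}_{\ge0}$ is: identically $0$ if $M$ is empty; identically $1$ if $M=\omega^B$; and otherwise strictly increasing and continuous, with $\nu_0(M)=0$ and $\lim_{x\to\infty}\nu_x(M)=1$.
   Context: $\omega$ denotes the set of nonnegative integers and $\omega^B$ the set of functions $B\to\omega$, ordered pointwise. $M\subseteq\omega^B$ is an upper set if $f\in M$ and $f\le g$ imply $g\in M$. The geometric distribution on $\omega$ with parameter $0<p\le1$ assigns probability $p(1-p)^k$ to $k$ (with $0^0=1$). For $T\in\mathbb{R}_{\ge0}$, $\nu_T$ is the probability measure on $\omega^B$ which is the product of $\#B$ copies of the geometric distribution with parameter $(1+T/\#B)^{-1}$. *)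

theory Defs
  imports "HOL-Probability.Probability"
begin

text \<open>omega^B: functions B -> nat, represented extensionally (value undefined outside B).\<close>
abbreviation omega_pow :: "'a set \<Rightarrow> ('a \<Rightarrow> nat) set" where
  "omega_pow B \<equiv> B \<rightarrow>\<^sub>E (UNIV :: nat set)"

definition upper_set :: "'a set \<Rightarrow> ('a \<Rightarrow> nat) set \<Rightarrow> bool" where
  "upper_set B M \<longleftrightarrow> (\<forall>f\<in>M. \<forall>g\<in>omega_pow B. (\<forall>b\<in>B. f b \<le> g b) \<longrightarrow> g \<in> M)"

definition nu :: "'a set \<Rightarrow> real \<Rightarrow> ('a \<Rightarrow> nat) pmf" where
  "nu B T = Pi_pmf B undefined (\<lambda>_. geometric_pmf (inverse (1 + T / real (card B))))"

end

theory Submission imports Defs "HOL-Analysis.Lipschitz" begin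

definition Zp :: "real \<Rightarrow> real \<Rightarrow> nat pmf" where
  "Zp p p' = bernoulli_pmf ((p-p')/p) \<bind> (\<lambda>c. if c then map_pmf Suc (geometric_pmf p') else return_pmf 0)"

lemma pmf_Zp:
  assumes "0 < p'" "p' < p" "p \<le> 1"
  shows "pmf (Zp p p') j = (if j = 0 then p'/p else (p-p')/p * ((1-p')^(j-1)*p'))"
proof -
  have s: "0 \<le> (p-p')/p" "(p-p')/p \<le> 1" using assms by (auto simp: field_simps)
  have pm: "pmf (map_pmf Suc (geometric_pmf p')) j = (if j = 0 then 0 else (1-p')^(j-1)*p')"
  proof (cases j)
    case 0
    then show ?thesis by (auto simp: pmf_eq_0_set_pmf)
  next
    case (Suc k)
    then show ?thesis using assms by (simp add: pmf_map_inj')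
  qed
  show ?thesis unfolding Zp_def pmf_bind
    using s assms by (simp add: pm pmf_return indicator_def field_simps)
qed

lemma geo_decomp:
  assumes "0 < p'" "p' < p" "p \<le> 1"
  shows "geometric_pmf p' = geometric_pmf p \<bind> (\<lambda>x. map_pmf ((+) x) (Zp p p'))"
proof (rule pmf_eqI)
  fix k :: nat
  have pmm: "pmf (map_pmf ((+) x) (Zp p p')) k = (if x \<le> k then pmf (Zp p p') (k - x) else 0)" for x
  proof (cases "x \<le> k")
    case True
    then have "k = x + (k - x)" by simp
    then have "pmf (map_pmf ((+) x) (Zp p p')) k = pmf (map_pmf ((+) x) (Zp p p')) (x + (k - x))" by simp
    also have "\<dots> = pmf (Zp p p') (k - x)" by (rule pmf_map_inj') (auto simp: inj_def)
    finally show ?thesis using True by simp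
  next
    case False
    then show ?thesis by (auto simp: pmf_eq_0_set_pmf)
  qed
  have "pmf (geometric_pmf p \<bind> (\<lambda>x. map_pmf ((+) x) (Zp p p'))) k
      = (\<Sum>x\<in>{..k}. pmf (map_pmf ((+) x) (Zp p p')) k * pmf (geometric_pmf p) x)"
    unfolding pmf_bind by (rule integral_measure_pmf_real) (auto simp: pmm split: if_splits)
  also have "\<dots> = (\<Sum>x\<in>{..k}. pmf (Zp p p') (k - x) * ((1-p)^x * p))"
    using assms by (intro sum.cong) (auto simp: pmm)
  also have "\<dots> = (\<Sum>x<k. pmf (Zp p p') (k - x) * ((1-p)^x * p)) + p' * (1-p)^k"
    using assms by (simp add: lessThan_Suc_atMost[symmetric] pmf_Zp)
  also have "(\<Sum>x<k. pmf (Zp p p') (k - x) * ((1-p)^x * p))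
      = (\<Sum>x<k. p' * (p - p') * ((1-p')^(k - Suc x) * (1-p)^x))"
    using assms by (intro sum.cong) (auto simp: pmf_Zp field_simps Suc_diff_Suc)
  also have "\<dots> = p' * ((1-p')^k - (1-p)^k)"
  proof -
    have "(1-p)^k - (1-p')^k = (p' - p) * (\<Sum>x<k. (1-p')^(k - Suc x) * (1-p)^x)"
      using power_diff_sumr2[of "1-p" k "1-p'"] by simp
    then have "(\<Sum>x<k. (1-p')^(k - Suc x) * (1-p)^x) * (p - p') = (1-p')^k - (1-p)^k"
      by (simp add: algebra_simps)
    then have "(\<Sum>x<k. p' * (p - p') * ((1-p')^(k - Suc x) * (1-p)^x)) = p' * ((1-p')^k - (1-p)^k)"
      by (simp add: sum_distrib_left[symmetric] sum_distrib_right[symmetric] mult.commute)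
    then show ?thesis .
  qed
  finally show "pmf (geometric_pmf p') k = pmf (geometric_pmf p \<bind> (\<lambda>x. map_pmf ((+) x) (Zp p p'))) k"
    using assms by (simp add: algebra_simps)
qed

lemma measure_bind_pmf':
  "measure_pmf.prob (bind_pmf M N) X = (\<integral>x. measure_pmf.prob (N x) X \<partial>measure_pmf M)"
proof -
  have int: "integrable (measure_pmf M) (\<lambda>x. measure_pmf.prob (N x) X)"
    by (rule measure_pmf.integrable_const_bound[where B=1]) auto
  have "ennreal (measure_pmf.prob (bind_pmf M N) X) = emeasure (bind_pmf M N) X"
    by (simp add: measure_pmf.emeasure_eq_measure)
  also have "\<dots> = (\<integral>\<^sup>+x. emeasure (N x) X \<partial>measure_pmf M)"
    by (rule emeasure_bind_pmf)
  also have "\<dots> = (\<integral>\<^sup>+x. ennreal (measure_pmf.prob (N x) X) \<partial>measure_pmf M)"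
    by (simp add: measure_pmf.emeasure_eq_measure)
  also have "\<dots> = ennreal (\<integral>x. measure_pmf.prob (N x) X \<partial>measure_pmf M)"
    by (rule nn_integral_eq_integral[OF int]) auto
  finally show ?thesis
    by (subst (asm) ennreal_inj) (auto intro: integral_nonneg_AE)
qed

lemma coupling:
  fixes B :: "'a set" and M :: "('a \<Rightarrow> nat) set"
  assumes fin: "finite B" and up: "upper_set B M" and Msub: "M \<subseteq> omega_pow B"
    and pp: "0 < p'" "p' < p" "p \<le> 1"
  defines "P \<equiv> Pi_pmf B undefined (\<lambda>_. geometric_pmf p)"
    and "P' \<equiv> Pi_pmf B undefined (\<lambda>_. geometric_pmf p')"
  shows "measure_pmf.prob P M \<le> measure_pmf.prob P' M
    \<and> measure_pmf.prob P' M - measure_pmf.prob P M \<le> 1 - (p'/p) ^ card B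
    \<and> (M \<noteq> {} \<and> M \<noteq> omega_pow B \<longrightarrow> measure_pmf.prob P M < measure_pmf.prob P' M)"
proof -
  define Z where "Z = Zp p p'"
  define Q where "Q f = Pi_pmf B undefined (\<lambda>b. map_pmf ((+) (f b)) Z)" for f :: "'a \<Rightarrow> nat"
  define G where "G f = measure_pmf.prob (Q f) M" for f
  define c where "c = 1 - (p'/p) ^ card B"
  define f0 where "f0 = (\<lambda>b. if b \<in> B then 0 else undefined :: nat)"
  have P'eq: "P' = P \<bind> Q"
    unfolding P'_def P_def Q_def Z_def
    by (subst geo_decomp[OF pp]) (rule Pi_pmf_bind[OF fin])
  have supp: "f \<in> omega_pow B" if "f \<in> set_pmf P" for f
    using set_Pi_pmf_subset[OF fin, of undefined "\<lambda>_. geometric_pmf p"] that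
    by (auto simp: P_def PiE_iff extensional_def)
  have G1: "G f = 1" if "f \<in> M" for f
  proof -
    have "set_pmf (Q f) \<subseteq> M"
    proof
      fix g assume "g \<in> set_pmf (Q f)"
      then have g: "g \<in> PiE_dflt B undefined (set_pmf \<circ> (\<lambda>b. map_pmf ((+) (f b)) Z))"
        using set_Pi_pmf_subset'[OF fin, of undefined "\<lambda>b. map_pmf ((+) (f b)) Z"] unfolding Q_def by blast
      then have "g \<in> omega_pow B" by (auto simp: PiE_dflt_def PiE_iff extensional_def)
      moreover have "\<forall>b\<in>B. f b \<le> g b" using g by (auto simp: PiE_dflt_def)
      ultimately show "g \<in> M" using up that unfolding upper_set_def by blast
    qed
    then have "AE x in measure_pmf (Q f). x \<in> M" by (auto intro!: AE_pmfI)
    then show ?thesis unfolding G_def by (subst measure_pmf.prob_eq_1) auto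
  qed
  have pZ0: "pmf (map_pmf ((+) k) Z) k = p'/p" for k
  proof -
    have "pmf (map_pmf ((+) k) Z) (k + 0) = pmf Z 0" by (rule pmf_map_inj') (auto simp: inj_def)
    then show ?thesis using pp by (simp add: Z_def pmf_Zp)
  qed
  have G2: "G f \<le> c" if "f \<in> set_pmf P" "f \<notin> M" for f
  proof -
    have fo: "f x = undefined" if "x \<notin> B" for x using supp[OF \<open>f \<in> set_pmf P\<close>] that
      by (auto simp: PiE_iff extensional_def)
    have "pmf (Q f) f = (p'/p) ^ card B"
      unfolding Q_def by (subst pmf_Pi'[OF fin]) (auto simp: fo pZ0)
    moreover have "measure_pmf.prob (Q f) (M \<union> {f}) = G f + measure_pmf.prob (Q f) {f}"
      unfolding G_def using that by (intro measure_pmf.finite_measure_Union) auto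
    moreover have "measure_pmf.prob (Q f) (M \<union> {f}) \<le> 1" by simp
    ultimately show ?thesis unfolding c_def by (simp add: measure_pmf_single)
  qed
  have G0: "0 \<le> G f" "G f \<le> 1" for f unfolding G_def by auto
  have c0: "0 \<le> c" unfolding c_def using pp by (auto intro!: power_le_one)
  have pP0: "pmf P f0 = p ^ card B"
    unfolding P_def using pp by (subst pmf_Pi'[OF fin]) (auto simp: f0_def)
  have f0P: "f0 \<in> set_pmf P" using pP0 pp by (simp add: set_pmf_iff)
  have eqP': "measure_pmf.prob P' M = (\<integral>f. G f \<partial>measure_pmf P)"
    unfolding P'eq G_def by (rule measure_bind_pmf')
  have eqP: "measure_pmf.prob P M = (\<integral>f. indicator M f \<partial>measure_pmf P)"
    by simp
  have intG: "integrable (measure_pmf P) G"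
    by (rule measure_pmf.integrable_const_bound[where B=1]) (auto simp: G0 abs_le_iff)
  have intI: "integrable (measure_pmf P) (indicator M :: _ \<Rightarrow> real)"
    by (rule measure_pmf.integrable_const_bound[where B=1]) (auto split: split_indicator)
  have diff: "measure_pmf.prob P' M - measure_pmf.prob P M = (\<integral>f. G f - indicator M f \<partial>measure_pmf P)"
    unfolding eqP' eqP by (rule Bochner_Integration.integral_diff[symmetric, OF intG intI])
  have intD: "integrable (measure_pmf P) (\<lambda>f. G f - indicator M f)"
    using intG intI by auto
  have lowpt: "0 \<le> G f - indicator M f" if "f \<in> set_pmf P" for f
    using G1 G0 by (auto split: split_indicator)
  have "0 \<le> (\<integral>f. G f - indicator M f \<partial>measure_pmf P)"
    by (rule integral_nonneg_AE) (rule AE_pmfI, rule lowpt)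
  hence A1: "measure_pmf.prob P M \<le> measure_pmf.prob P' M" using diff by simp
  have "(\<integral>f. G f - indicator M f \<partial>measure_pmf P) \<le> (\<integral>f. c \<partial>measure_pmf P)"
    by (rule integral_mono_AE[OF intD]) (auto intro!: AE_pmfI simp: G1 G2 c0 split: split_indicator)
  hence A2: "measure_pmf.prob P' M - measure_pmf.prob P M \<le> c" using diff by simp
  have A3: "measure_pmf.prob P M < measure_pmf.prob P' M" if ne: "M \<noteq> {}" and nf: "M \<noteq> omega_pow B"
  proof -
    have f0M: "f0 \<notin> M"
    proof
      assume "f0 \<in> M"
      then have "omega_pow B \<subseteq> M" using up unfolding upper_set_def f0_def by fastforce
      then show False using nf Msub by blast
    qed
    obtain f1 where f1: "f1 \<in> M" using ne by blast
    have f1o: "f1 x = undefined" if "x \<notin> B" for x using Msub f1 that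
      by (auto simp: PiE_iff extensional_def)
    have map0: "map_pmf ((+) (0::nat)) Z = Z" proof -
      have "((+) (0::nat)) = id" by auto
      then show ?thesis by (simp add: map_pmf_id)
    qed
    have "pmf (Q f0) f1 = (\<Prod>x\<in>B. pmf Z (f1 x))"
      unfolding Q_def by (subst pmf_Pi'[OF fin]) (auto simp: f1o f0_def map0)
    also have "\<dots> > 0"
      using pp by (intro prod_pos) (auto simp: Z_def pmf_Zp)
    finally have "0 < pmf (Q f0) f1" .
    also have "pmf (Q f0) f1 \<le> G f0"
      unfolding G_def using f1 by (subst measure_pmf_single[symmetric]) (auto intro!: measure_pmf.finite_measure_mono)
    finally have Gf0: "0 < G f0" .
    have "(\<integral>f. G f0 * indicator {f0} f \<partial>measure_pmf P) \<le> (\<integral>f. G f - indicator M f \<partial>measure_pmf P)"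
    proof (rule integral_mono_AE[OF _ intD])
      show "integrable (measure_pmf P) (\<lambda>f. G f0 * indicator {f0} f)"
        by (rule measure_pmf.integrable_const_bound[where B="G f0"]) (auto split: split_indicator simp: G0)
      show "AE f in measure_pmf P. G f0 * indicator {f0} f \<le> G f - indicator M f"
        by (rule AE_pmfI) (auto simp: f0M G1 G0 split: split_indicator)
    qed
    moreover have "(\<integral>f. G f0 * indicator {f0} f \<partial>measure_pmf P) = G f0 * p ^ card B"
      by (simp add: measure_pmf_single pP0)
    moreover have "0 < G f0 * p ^ card B" using Gf0 pp by simp
    ultimately show ?thesis using diff by (simp add: measure_pmf_single pP0)
  qed
  show ?thesis using A1 A2 A3 unfolding c_def by blast
qed


lemma lim_par:
  assumes "n > 0"
  shows "((\<lambda>T::real. inverse (1 + T / real n)) \<longlongrightarrow> 0) at_top"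
proof -
  have "filterlim (\<lambda>T::real. inverse (real n) * T) at_top at_top"
    using assms by (intro filterlim_tendsto_pos_mult_at_top[OF tendsto_const _ filterlim_ident]) auto
  then have "filterlim (\<lambda>T::real. T / real n) at_top at_top"
    by (simp add: divide_inverse mult.commute)
  then have "filterlim (\<lambda>T::real. 1 + T / real n) at_top at_top"
    by (intro filterlim_tendsto_add_at_top[OF tendsto_const])
  then show ?thesis by (rule tendsto_inverse_0_at_top)
qed

lemma measure_geo_ge:
  assumes "0 < p" "p \<le> 1"
  shows "measure_pmf.prob (geometric_pmf p) {m..} = (1-p)^m"
proof -
  have "measure_pmf.prob (geometric_pmf p) {..<m} = (\<Sum>k<m. (1-p)^k * p)"
    using assms by (subst measure_pmf.finite_measure_eq_sum_singleton) (auto simp: measure_pmf_single)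
  also have "\<dots> = 1 - (1-p)^m"
    using assms by (simp add: sum_distrib_right[symmetric] sum_gp_strict)
  finally have "measure_pmf.prob (geometric_pmf p) {..<m} = 1 - (1-p)^m" .
  moreover have "{m..} = UNIV - {..<m}" by auto
  ultimately show ?thesis
    using measure_pmf.prob_compl[of "{..<m}" "geometric_pmf p"] by simp
qed


theorem theorem7:
  fixes B :: "'a set" and M :: "('a \<Rightarrow> nat) set"
  assumes "finite B" and "B \<noteq> {}"
    and "M \<subseteq> omega_pow B" and "upper_set B M"
  shows "(M = {} \<longrightarrow> (\<forall>x\<ge>0. measure_pmf.prob (nu B x) M = 0))
       \<and> (M = omega_pow B \<longrightarrow> (\<forall>x\<ge>0. measure_pmf.prob (nu B x) M = 1))
       \<and> (M \<noteq> {} \<and> M \<noteq> omega_pow B \<longrightarrow>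
            strict_mono_on {0..} (\<lambda>x. measure_pmf.prob (nu B x) M)
          \<and> continuous_on {0..} (\<lambda>x. measure_pmf.prob (nu B x) M)
          \<and> measure_pmf.prob (nu B 0) M = 0
          \<and> ((\<lambda>x. measure_pmf.prob (nu B x) M) \<longlongrightarrow> 1) at_top)"
proof -
  note fin = assms(1) and Msub = assms(3) and up = assms(4)
  define n where "n = card B"
  have n0: "n > 0" using assms(1,2) by (simp add: n_def card_gt_0_iff)
  define par where "par T = inverse (1 + T / real n)" for T :: real
  define F where "F T = measure_pmf.prob (nu B T) M" for T
  have nuE: "nu B T = Pi_pmf B undefined (\<lambda>_. geometric_pmf (par T))" for T
    by (simp add: nu_def par_def n_def)
  have par_pos: "0 < par T" "par T \<le> 1" if "T \<ge> 0" for T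
    using that n0 by (auto simp: par_def field_simps)
  have par_less: "par T' < par T" if "0 \<le> T" "T < T'" for T T'
    using that n0 unfolding par_def by (intro le_imp_inverse_le order.strict_implies_order
      less_imp_inverse_less) (auto simp: field_simps intro: less_imp_inverse_less divide_strict_right_mono)
  have coup: "F T \<le> F T' \<and> F T' - F T \<le> 1 - (par T' / par T) ^ n
      \<and> (M \<noteq> {} \<and> M \<noteq> omega_pow B \<longrightarrow> F T < F T')" if "0 \<le> T" "T < T'" for T T'
    unfolding F_def nuE n_def
    by (rule coupling[OF fin up Msub par_pos(1) par_less par_pos(2)]) (use that in auto)
  have supp: "set_pmf (nu B T) \<subseteq> omega_pow B" for T
    using set_Pi_pmf_subset[OF fin, of undefined "\<lambda>_. geometric_pmf (par T)"]
    by (auto simp: nuE PiE_iff extensional_def)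
  have P1: "M = {} \<longrightarrow> (\<forall>x\<ge>0. F x = 0)" by (simp add: F_def)
  have P2: "M = omega_pow B \<longrightarrow> (\<forall>x\<ge>0. F x = 1)"
  proof (intro impI allI)
    fix x assume "M = omega_pow B"
    then have "AE y in measure_pmf (nu B x). y \<in> M" using supp by (auto intro!: AE_pmfI)
    then show "F x = 1" unfolding F_def by (subst measure_pmf.prob_eq_1) auto
  qed
  have P3: "strict_mono_on {0..} F \<and> continuous_on {0..} F \<and> F 0 = 0 \<and> (F \<longlongrightarrow> 1) at_top"
    if ne: "M \<noteq> {}" and nf: "M \<noteq> omega_pow B"
  proof (intro conjI)
    show "strict_mono_on {0..} F"
      using coup ne nf by (auto simp: strict_mono_on_def)
    have "1-lipschitz_on {0..} F"
    proof (rule lipschitz_on_leI)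
      fix x y :: real assume xy: "x \<in> {0..}" "y \<in> {0..}" "x \<le> y"
      show "dist (F x) (F y) \<le> 1 * dist x y"
      proof (cases "x = y")
        case False
        then have xy': "0 \<le> x" "x < y" using xy by auto
        define r where "r = par y / par x"
        have r: "r = (real n + x) / (real n + y)"
        proof -
          have pe: "par t = real n / (real n + t)" if "t \<ge> 0" for t
            using n0 that by (simp add: par_def field_simps)
          show ?thesis using n0 xy' unfolding r_def pe[of x, OF xy'(1)] pe[of y, OF order.trans[OF xy'(1) order.strict_implies_order[OF xy'(2)]]]
            by (simp add: divide_simps)
        qed
        have "1 + real n * (r - 1) \<le> (1 + (r - 1)) ^ n"
        proof (rule Bernoulli_inequality)
          have "0 \<le> r" unfolding r using n0 xy' by (intro divide_nonneg_nonneg) auto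
          then show "-1 \<le> r - 1" by simp
        qed
        then have "1 - r ^ n \<le> real n * (1 - r)" by (simp add: algebra_simps)
        also have "real n * (1 - r) = real n * (y - x) / (real n + y)"
        proof -
          have "1 - r = (y - x)/(real n + y)" unfolding r using n0 xy' by (simp add: divide_simps)
          then show ?thesis by simp
        qed
        also have "\<dots> \<le> y - x"
          using n0 xy' by (simp add: field_simps mult_right_mono)
        finally have "F y - F x \<le> y - x" using coup[OF xy'] unfolding r_def by linarith
        moreover have "F x \<le> F y" using coup[OF xy'] by simp
        ultimately show ?thesis by (simp add: dist_real_def abs_if)
      qed simp
    qed simp
    then show "continuous_on {0..} F" by (rule lipschitz_on_continuous_on)
    define f0 where "f0 = (\<lambda>b. if b \<in> B then 0 else undefined :: nat)"
    have f0M: "f0 \<notin> M"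
    proof
      assume "f0 \<in> M"
      then have "omega_pow B \<subseteq> M" using up unfolding upper_set_def f0_def by fastforce
      then show False using nf Msub by blast
    qed
    have "par 0 = 1" by (simp add: par_def)
    then have "nu B 0 = return_pmf f0" by (simp add: nuE fin f0_def)
    then show "F 0 = 0" using f0M by (simp add: F_def)
    obtain f1 where f1: "f1 \<in> M" using ne by blast
    define L where "L T = (\<Prod>b\<in>B. (1 - par T) ^ f1 b)" for T
    have LF: "L T \<le> F T" if "T \<ge> 0" for T
    proof -
      have "PiE_dflt B undefined (\<lambda>b. {f1 b..}) \<subseteq> M"
      proof
        fix g assume g: "g \<in> PiE_dflt B undefined (\<lambda>b. {f1 b..})"
        then have "g \<in> omega_pow B" by (auto simp: PiE_dflt_def PiE_iff extensional_def)
        moreover have "\<forall>b\<in>B. f1 b \<le> g b" using g by (auto simp: PiE_dflt_def)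
        ultimately show "g \<in> M" using up f1 unfolding upper_set_def by blast
      qed
      then have "measure_pmf.prob (nu B T) (PiE_dflt B undefined (\<lambda>b. {f1 b..})) \<le> F T"
        unfolding F_def by (rule measure_pmf.finite_measure_mono) auto
      moreover have "measure_pmf.prob (nu B T) (PiE_dflt B undefined (\<lambda>b. {f1 b..})) = L T"
        unfolding nuE L_def using par_pos[OF that]
        by (subst measure_Pi_pmf_PiE_dflt[OF fin]) (simp add: measure_geo_ge)
      ultimately show ?thesis by simp
    qed
    have "(L \<longlongrightarrow> (\<Prod>b\<in>B. (1 - 0) ^ f1 b)) at_top"
      unfolding L_def par_def
      by (intro tendsto_prod tendsto_power tendsto_diff tendsto_const lim_par n0)
    then have Ll: "(L \<longlongrightarrow> 1) at_top" by simp
    show "(F \<longlongrightarrow> 1) at_top"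
    proof (rule tendsto_sandwich[OF _ _ Ll tendsto_const])
      show "eventually (\<lambda>T. L T \<le> F T) at_top"
        using eventually_ge_at_top[of 0] by eventually_elim (rule LF)
      show "eventually (\<lambda>T. F T \<le> 1) at_top" by (simp add: F_def)
    qed
  qed
  show ?thesis using P1 P2 P3 unfolding F_def by blast
qed

end
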